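(* Let $0<p\leqslant q:=1-p$, let $\tilde A_k$ be as in the context and let $0<\varepsilon<\pi/2$. Then there exist $\varepsilon'\in(0,1)$ and absolute constants (independent of $k$ and $z$) such that, for $|z|\geqslant1$: (i) for $|\arg(z)|\leqslant\varepsilon$, $\tilde A_k(z)=O\left(|z|^{\varepsilon'}\right)$ uniformly in $z$ and $k\geqslant0$; (ii) for $\varepsilon\leqslant|\arg(z)|\leqslant\pi$, $e^z\tilde A_k(z)=O\left(e^{(1-\varepsilon')|z|}\right)$ uniformly in $z$ and $k\geqslant0$.
   Context: The random variables $X_n$ are defined by $X_0=0$ and $X_n \stackrel{d}{=} X_{I_n}+1$ for $n\geqslant 1$, where $(X_n)$ and $(I_n)$ are independent and $\mathbb{P}(I_n=k)=\binom{n}{k}\frac{p^kq^{n-k}-p^k(q-p)^{n-k}}{1-q^n}$ for $k=0,\dots,n-1$. For $k\geqslant0$, $\tilde A_k(z):=e^{-z}\sum_{n\geqslant0}\mathbb{P}(X_n=k)z^n/n!$ (entire functions). They satisfy $\tilde A_0(z)=e^{-z}$ and $\tilde{A}_{k+1}(z)=\left(1-e^{-pz}\right)\tilde{A}_k(pz)+e^{-pz}\tilde{A}_{k+1}(qz)$ for $k\geqslant0$. *)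

theory Defs
  imports "HOL-Analysis.Analysis"
begin

definition pI :: "real \<Rightarrow> nat \<Rightarrow> nat \<Rightarrow> real" where
  "pI p n k = real (n choose k) *
     (p ^ k * (1 - p) ^ (n - k) - p ^ k * ((1 - p) - p) ^ (n - k)) / (1 - (1 - p) ^ n)"

text \<open>pX p k n = P(X_n = k), from X_0 = 0 and X_n = X_{I_n} + 1 (n >= 1), I_n independent of (X_j).\<close>
fun pX :: "real \<Rightarrow> nat \<Rightarrow> nat \<Rightarrow> real" where
  "pX p 0 n = (if n = 0 then 1 else 0)"
| "pX p (Suc k) n = (if n = 0 then 0 else (\<Sum>j<n. pI p n j * pX p k j))"

definition At :: "real \<Rightarrow> nat \<Rightarrow> complex \<Rightarrow> complex" where
  "At p k z = exp (- z) * (\<Sum>n. complex_of_real (pX p k n) * z ^ n / of_nat (fact n))"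

end

theory Submission
  imports Defs
begin

lemma q_pow_lt: assumes "0 < p" "p \<le> 1 - p" "n \<ge> 1" shows "(1 - p) ^ n < (1::real)"
  using assms by (simp add: power_less_one_iff)

lemma pI_nonneg: assumes "0 < p" "p \<le> 1 - p" "j < n" shows "0 \<le> pI p n j"
proof -
  have "(1 - p - p) ^ (n - j) \<le> (1 - p) ^ (n - j)" using assms by (intro power_mono) auto
  moreover have "(1-p)^n < 1" using q_pow_lt[OF assms(1,2), of n] assms(3) by simp
  ultimately show ?thesis unfolding pI_def using assms
    by (intro divide_nonneg_pos mult_nonneg_nonneg) (auto simp: algebra_simps intro!: mult_left_mono)
qed

lemma pI_sum: assumes "0 < p" "p \<le> 1 - p" "n \<ge> 1" shows "(\<Sum>j<n. pI p n j) = 1"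
proof -
  have b1: "(\<Sum>j\<le>n. real (n choose j) * p^j * (1-p)^(n-j)) = 1"
    using binomial_ring[of p "1-p" n] by (simp add: mult.commute)
  have b2: "(\<Sum>j\<le>n. real (n choose j) * p^j * (1-p-p)^(n-j)) = (1-p)^n"
    using binomial_ring[of p "1-p-p" n] by (simp add: mult.commute)
  have s1: "(\<Sum>j<n. real (n choose j) * p^j * (1-p)^(n-j)) = 1 - p^n"
    using b1 by (simp add: lessThan_Suc_atMost[symmetric])
  have s2: "(\<Sum>j<n. real (n choose j) * p^j * (1-p-p)^(n-j)) = (1-p)^n - p^n"
    using b2 by (simp add: lessThan_Suc_atMost[symmetric])
  have ne: "1 - (1-p)^n \<noteq> 0" using q_pow_lt[OF assms] by simp
  have "(\<Sum>j<n. pI p n j) = (\<Sum>j<n. real (n choose j) * p^j * (1-p)^(n-j) - real (n choose j) * p^j * (1-p-p)^(n-j)) / (1 - (1-p)^n)"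
    unfolding pI_def sum_divide_distrib by (rule sum.cong) (auto simp: algebra_simps)
  also have "\<dots> = 1" using s1 s2 ne by (simp add: sum_subtractf)
  finally show ?thesis .
qed

lemma pX_bounds: assumes "0 < p" "p \<le> 1 - p" shows "0 \<le> pX p k n \<and> pX p k n \<le> 1"
proof (induction k arbitrary: n)
  case 0 then show ?case by simp
next
  case (Suc k)
  show ?case
  proof (cases "n = 0")
    case True then show ?thesis by simp
  next
    case False
    have "(\<Sum>j<n. pI p n j * pX p k j) \<le> (\<Sum>j<n. pI p n j)"
      using Suc pI_nonneg[OF assms] by (intro sum_mono) (simp add: mult_left_le)
    also have "\<dots> = 1" using pI_sum[OF assms] False by simp
    finally have "(\<Sum>j<n. pI p n j * pX p k j) \<le> 1" .
    moreover have "0 \<le> (\<Sum>j<n. pI p n j * pX p k j)"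
      using Suc pI_nonneg[OF assms] by (intro sum_nonneg) simp
    ultimately show ?thesis using False by simp
  qed
qed

lemma exp_sums_c: "(\<lambda>n. (z::complex)^n / of_nat (fact n)) sums exp z"
  using exp_converges[of z] by (simp add: scaleR_conv_of_real divide_inverse mult.commute)

lemma summable_exp_r: "summable (\<lambda>n. (r::real)^n / fact n)"
  using sums_summable[OF exp_converges[of r]] by (simp add: divide_inverse mult.commute)

lemma summable_bdd:
  assumes "\<And>n. \<bar>a n\<bar> \<le> 1"
  shows "summable (\<lambda>n. norm (complex_of_real (a n) * (z::complex)^n / of_nat (fact n)))"
proof (rule summable_comparison_test[OF _ summable_exp_r[of "norm z"]])
  show "\<exists>N. \<forall>n\<ge>N. norm (norm (complex_of_real (a n) * z ^ n / of_nat (fact n))) \<le> norm z ^ n / fact n"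
    using assms by (auto simp: norm_mult norm_divide norm_power intro!: divide_right_mono mult_left_le_one_le)
qed

lemma norm_series_bdd:
  assumes "\<And>n. \<bar>a n\<bar> \<le> 1"
  shows "norm (\<Sum>n. complex_of_real (a n) * (z::complex)^n / of_nat (fact n)) \<le> exp (norm z)"
proof -
  have "norm (\<Sum>n. complex_of_real (a n) * (z::complex)^n / of_nat (fact n))
     \<le> (\<Sum>n. norm (complex_of_real (a n) * (z::complex)^n / of_nat (fact n)))"
    by (rule summable_norm[OF summable_bdd[OF assms]])
  also have "\<dots> \<le> (\<Sum>n. norm z ^ n / fact n)"
    using assms by (intro suminf_le summable_bdd summable_exp_r)
      (auto simp: norm_mult norm_divide norm_power intro!: divide_right_mono mult_left_le_one_le)
  also have "\<dots> = exp (norm z)" using exp_converges[of "norm z"]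
    by (simp add: sums_iff divide_inverse mult.commute)
  finally show ?thesis .
qed

lemma cauchy_exp:
  fixes a :: "nat \<Rightarrow> real" and p c :: real and z :: complex
  assumes "\<And>n. \<bar>a n\<bar> \<le> 1"
  shows "(\<lambda>n. complex_of_real (\<Sum>j\<le>n. real (n choose j) * a j * p^j * c^(n-j)) * z^n / of_nat (fact n)) sums
     ((\<Sum>n. complex_of_real (a n) * (of_real p * z)^n / of_nat (fact n)) * exp (of_real c * z))"
proof -
  let ?A = "\<lambda>n. complex_of_real (a n) * (of_real p * z)^n / of_nat (fact n)"
  let ?B = "\<lambda>n. (of_real c * z)^n / of_nat (fact n)"
  have sA: "summable (\<lambda>n. norm (?A n))" by (rule summable_bdd[OF assms])
  have sB: "summable (\<lambda>n. norm (?B n))" using summable_bdd[of "\<lambda>_. 1" "of_real c * z"] by simp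
  have "exp (of_real c * z) = (\<Sum>n. ?B n)" using exp_sums_c by (simp add: sums_iff)
  hence 1: "(\<lambda>n. \<Sum>j\<le>n. ?A j * ?B (n - j)) sums ((\<Sum>n. ?A n) * exp (of_real c * z))"
    using Cauchy_product_sums[OF sA sB] by simp
  have "(\<lambda>n. \<Sum>j\<le>n. ?A j * ?B (n - j)) = (\<lambda>n. complex_of_real (\<Sum>j\<le>n. real (n choose j) * a j * p^j * c^(n-j)) * z^n / of_nat (fact n))"
  proof (rule ext)
    fix n
    have "(\<Sum>j\<le>n. ?A j * ?B (n - j)) = (\<Sum>j\<le>n. complex_of_real (real (n choose j) * a j * p^j * c^(n-j)) * z^n / of_nat (fact n))"
    proof (rule sum.cong[OF refl])
      fix j assume "j \<in> {..n}" hence jn: "j \<le> n" by simp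
      have zz: "z^j * z^(n-j) = z^n" using jn by (simp add: power_add[symmetric])
      have bf: "complex_of_real (real (n choose j)) = fact n / (fact j * fact (n - j))"
        using binomial_fact[OF jn, where 'a=complex] by simp
      show "?A j * ?B (n - j) = complex_of_real (real (n choose j) * a j * p^j * c^(n-j)) * z^n / of_nat (fact n)"
        unfolding of_real_mult bf of_real_power power_mult_distrib using zz
        by (simp add: field_simps)
    qed
    also have "\<dots> = complex_of_real (\<Sum>j\<le>n. real (n choose j) * a j * p^j * c^(n-j)) * z^n / of_nat (fact n)"
      by (simp add: sum_distrib_right sum_divide_distrib)
    finally show "(\<Sum>j\<le>n. ?A j * ?B (n - j)) = complex_of_real (\<Sum>j\<le>n. real (n choose j) * a j * p^j * c^(n-j)) * z^n / of_nat (fact n)" .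
  qed
  with 1 show ?thesis by simp
qed

definition F :: "real \<Rightarrow> nat \<Rightarrow> complex \<Rightarrow> complex" where
  "F p k z = (\<Sum>n. complex_of_real (pX p k n) * z ^ n / of_nat (fact n))"

lemma pX_abs: assumes "0 < p" "p \<le> 1 - p" shows "\<bar>pX p k n\<bar> \<le> 1"
  using pX_bounds[OF assms] by auto

lemma F_sums: assumes "0 < p" "p \<le> 1 - p"
  shows "(\<lambda>n. complex_of_real (pX p k n) * z ^ n / of_nat (fact n)) sums F p k z"
proof -
  have "summable (\<lambda>n. norm (complex_of_real (pX p k n) * z^n / of_nat (fact n)))"
    by (rule summable_bdd) (rule pX_abs[OF assms])
  then show ?thesis unfolding F_def by (rule summable_sums[OF summable_norm_cancel])
qed

lemma hlp: "(D::real) \<noteq> 0 \<Longrightarrow> c*x*u*a - c*x*u*b = c*(u*a - u*b)/D * x * D"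
  by (simp add: field_simps)

lemma coef_id: assumes "0 < p" "p \<le> 1 - p"
  shows "pX p (Suc k) n * (1 - (1-p)^n) =
    (\<Sum>j\<le>n. real (n choose j) * pX p k j * p^j * (1-p)^(n-j)) -
    (\<Sum>j\<le>n. real (n choose j) * pX p k j * p^j * (1-p-p)^(n-j))"
proof (cases "n = 0")
  case True then show ?thesis by simp
next
  case False
  have ne: "1 - (1-p)^n \<noteq> 0" using q_pow_lt[OF assms, of n] False by simp
  have "(\<Sum>j\<le>n. real (n choose j) * pX p k j * p^j * (1-p)^(n-j)) -
    (\<Sum>j\<le>n. real (n choose j) * pX p k j * p^j * (1-p-p)^(n-j))
    = (\<Sum>j\<le>n. real (n choose j) * pX p k j * p^j * (1-p)^(n-j) - real (n choose j) * pX p k j * p^j * (1-p-p)^(n-j))"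
    by (simp add: sum_subtractf)
  also have "\<dots> = (\<Sum>j<n. real (n choose j) * pX p k j * p^j * (1-p)^(n-j) - real (n choose j) * pX p k j * p^j * (1-p-p)^(n-j))"
    by (simp add: lessThan_Suc_atMost[symmetric])
  also have "\<dots> = (\<Sum>j<n. pI p n j * pX p k j) * (1 - (1-p)^n)"
    unfolding sum_distrib_right pI_def by (intro sum.cong refl hlp[OF ne])
  moreover have "pX p (Suc k) n = (\<Sum>j<n. pI p n j * pX p k j)" using False by simp
  ultimately show ?thesis by (simp only:)
qed

lemma ddl: "(A::complex) * w / f - B * w / f = (A - B) * w / f"
  by (simp add: diff_divide_distrib left_diff_distrib)

lemma F_rec: assumes "0 < p" "p \<le> 1 - p"
  shows "F p (Suc k) z = F p (Suc k) (of_real (1-p) * z) +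
     F p k (of_real p * z) * (exp (of_real (1-p) * z) - exp (of_real (1-p-p) * z))"
proof -
  have s1: "(\<lambda>n. complex_of_real (pX p (Suc k) n) * z ^ n / of_nat (fact n)) sums F p (Suc k) z"
    by (rule F_sums[OF assms])
  have s2: "(\<lambda>n. complex_of_real (pX p (Suc k) n * (1-p)^n) * z ^ n / of_nat (fact n)) sums F p (Suc k) (of_real (1-p) * z)"
    proof -
    have e: "\<And>n. complex_of_real (pX p (Suc k) n * (1-p)^n) * z^n = complex_of_real (pX p (Suc k) n) * (of_real (1-p) * z)^n"
      by (simp only: of_real_mult of_real_power power_mult_distrib mult.assoc)
    show ?thesis unfolding e by (rule F_sums[OF assms])
  qed
  note c1 = cauchy_exp[of "pX p k" p "1-p" z, OF pX_abs[OF assms]]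
  note c2 = cauchy_exp[of "pX p k" p "1-p-p" z, OF pX_abs[OF assms]]
  have sAB: "(\<lambda>n. complex_of_real (pX p (Suc k) n) * z ^ n / of_nat (fact n) - complex_of_real (pX p (Suc k) n * (1-p)^n) * z ^ n / of_nat (fact n))
     sums (F p (Suc k) z - F p (Suc k) (of_real (1-p) * z))" by (rule sums_diff[OF s1 s2])
  have eqAB: "(\<lambda>n. complex_of_real (pX p (Suc k) n) * z ^ n / of_nat (fact n) - complex_of_real (pX p (Suc k) n * (1-p)^n) * z ^ n / of_nat (fact n))
     = (\<lambda>n. complex_of_real (\<Sum>j\<le>n. real (n choose j) * pX p k j * p^j * (1-p)^(n-j)) * z^n / of_nat (fact n)
         - complex_of_real (\<Sum>j\<le>n. real (n choose j) * pX p k j * p^j * (1-p-p)^(n-j)) * z^n / of_nat (fact n))"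
  proof (rule ext)
    fix n
    have "complex_of_real (pX p (Suc k) n) - complex_of_real (pX p (Suc k) n * (1-p)^n)
      = complex_of_real (\<Sum>j\<le>n. real (n choose j) * pX p k j * p^j * (1-p)^(n-j)) -
    complex_of_real (\<Sum>j\<le>n. real (n choose j) * pX p k j * p^j * (1-p-p)^(n-j))"
      proof -
      have r: "pX p (Suc k) n - pX p (Suc k) n * (1-p)^n = (\<Sum>j\<le>n. real (n choose j) * pX p k j * p^j * (1-p)^(n-j)) -
    (\<Sum>j\<le>n. real (n choose j) * pX p k j * p^j * (1-p-p)^(n-j))"
        using coef_id[OF assms, of k n] by (simp only: right_diff_distrib mult_1_right)
      show ?thesis by (simp only: of_real_diff[symmetric] r)
    qed
    then show "complex_of_real (pX p (Suc k) n) * z ^ n / of_nat (fact n) - complex_of_real (pX p (Suc k) n * (1-p)^n) * z ^ n / of_nat (fact n)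
     = complex_of_real (\<Sum>j\<le>n. real (n choose j) * pX p k j * p^j * (1-p)^(n-j)) * z^n / of_nat (fact n)
         - complex_of_real (\<Sum>j\<le>n. real (n choose j) * pX p k j * p^j * (1-p-p)^(n-j)) * z^n / of_nat (fact n)"
      unfolding ddl by (rule arg_cong[where f="\<lambda>t. t * z^n / of_nat (fact n)"])
  qed
  have "(\<lambda>n. complex_of_real (\<Sum>j\<le>n. real (n choose j) * pX p k j * p^j * (1-p)^(n-j)) * z^n / of_nat (fact n)
         - complex_of_real (\<Sum>j\<le>n. real (n choose j) * pX p k j * p^j * (1-p-p)^(n-j)) * z^n / of_nat (fact n))
     sums (F p (Suc k) z - F p (Suc k) (of_real (1-p) * z))" using sAB unfolding eqAB .
  moreover have "(\<lambda>n. complex_of_real (\<Sum>j\<le>n. real (n choose j) * pX p k j * p^j * (1-p)^(n-j)) * z^n / of_nat (fact n)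
         - complex_of_real (\<Sum>j\<le>n. real (n choose j) * pX p k j * p^j * (1-p-p)^(n-j)) * z^n / of_nat (fact n))
     sums (F p k (of_real p * z) * exp (of_real (1-p) * z) - F p k (of_real p * z) * exp (of_real (1-p-p) * z))"
    using sums_diff[OF c1 c2] by (simp only: F_def[symmetric])
  ultimately have eq: "F p (Suc k) z - F p (Suc k) (of_real (1-p) * z) = F p k (of_real p * z) * exp (of_real (1-p) * z) - F p k (of_real p * z) * exp (of_real (1-p-p) * z)"
    by (rule sums_unique2)
  have h: "\<And>a b c :: complex. a - b = c \<Longrightarrow> a = b + c" by simp
  show ?thesis unfolding right_diff_distrib by (rule h[OF eq])
qed

lemma gen_ind:
  fixes g :: "nat \<Rightarrow> complex \<Rightarrow> real" and h a b :: "complex \<Rightarrow> real" and S :: "complex set"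
  assumes p: "0 < p" "p \<le> 1 - p" and R: "1 \<le> p * R"
  and S: "\<And>z. z \<in> S \<Longrightarrow> R \<le> norm z \<Longrightarrow> of_real p * z \<in> S \<and> of_real (1-p) * z \<in> S"
  and base: "\<And>z. z \<in> S \<Longrightarrow> 1 \<le> norm z \<Longrightarrow> g 0 z \<le> B * h z"
  and small: "\<And>k z. z \<in> S \<Longrightarrow> 1 \<le> norm z \<Longrightarrow> norm z \<le> R \<Longrightarrow> g k z \<le> B * h z"
  and rec: "\<And>k z. z \<in> S \<Longrightarrow> R \<le> norm z \<Longrightarrow> g (Suc k) z \<le> a z * g k (of_real p * z) + b z * g (Suc k) (of_real (1-p) * z)"
  and contr: "\<And>z. z \<in> S \<Longrightarrow> R \<le> norm z \<Longrightarrow> a z * h (of_real p * z) + b z * h (of_real (1-p) * z) \<le> h z"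
  and nna: "\<And>z. 0 \<le> a z" and nnb: "\<And>z. 0 \<le> b z" and B: "0 \<le> B"
  shows "z \<in> S \<Longrightarrow> 1 \<le> norm z \<Longrightarrow> g k z \<le> B * h z"
proof -
  have main: "\<forall>k z. k + nat \<lfloor>norm z\<rfloor> = N \<longrightarrow> z \<in> S \<longrightarrow> 1 \<le> norm z \<longrightarrow> g k z \<le> B * h z" for N
  proof (induction N rule: less_induct)
    case (less N)
    show ?case
    proof (intro allI impI)
      fix k z assume N: "k + nat \<lfloor>norm z\<rfloor> = N" and zS: "z \<in> S" and z1: "1 \<le> norm z"
      show "g k z \<le> B * h z"
      proof (cases "norm z \<le> R")
        case True then show ?thesis using small zS z1 by blast
      next
        case False
        hence zR: "R \<le> norm z" by simp
        show ?thesis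
        proof (cases k)
          case 0 then show ?thesis using base zS z1 by blast
        next
          case (Suc k')
          have np: "norm (of_real p * z) = p * norm z" using p by (simp add: norm_mult)
          have nq: "norm (of_real (1-p) * z) = (1-p) * norm z" using p by (simp add: norm_mult del: of_real_diff)
          have pz1: "1 \<le> p * norm z" using R zR p by (meson mult_left_mono order_trans less_imp_le)
          have "p * norm z \<le> (1-p) * norm z" using p by (intro mult_right_mono) auto
          hence qz1: "1 \<le> (1-p) * norm z" using pz1 by linarith
          have fl1: "\<lfloor>p * norm z\<rfloor> \<le> \<lfloor>norm z\<rfloor>" using p z1
            by (intro floor_mono) (simp add: mult_left_le_one_le)
          have fl2: "\<lfloor>(1-p) * norm z\<rfloor> < \<lfloor>norm z\<rfloor>"
          proof -
            have "(1-p) * norm z \<le> norm z - 1" using pz1 by (simp add: algebra_simps)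
            hence "\<lfloor>(1-p) * norm z\<rfloor> \<le> \<lfloor>norm z - 1\<rfloor>" by (rule floor_mono)
            thus ?thesis by simp
          qed
          have "0 \<le> \<lfloor>p * norm z\<rfloor>" "0 \<le> \<lfloor>(1-p) * norm z\<rfloor>" using pz1 qz1 by auto
          hence m1: "k' + nat \<lfloor>norm (of_real p * z)\<rfloor> < N" and m2: "Suc k' + nat \<lfloor>norm (of_real (1-p) * z)\<rfloor> < N"
            using N Suc fl1 fl2 np nq z1 by auto
          have S2: "of_real p * z \<in> S" "of_real (1-p) * z \<in> S" using S zS zR by auto
          have i1: "g k' (of_real p * z) \<le> B * h (of_real p * z)"
            using less.IH[OF m1] S2 np pz1 by auto
          have i2: "g (Suc k') (of_real (1-p) * z) \<le> B * h (of_real (1-p) * z)"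
            using less.IH[OF m2] S2 nq qz1 by auto
          have "g k z \<le> a z * g k' (of_real p * z) + b z * g (Suc k') (of_real (1-p) * z)"
            using rec zS zR Suc by blast
          also have "\<dots> \<le> a z * (B * h (of_real p * z)) + b z * (B * h (of_real (1-p) * z))"
            using i1 i2 nna nnb by (intro add_mono mult_left_mono) auto
          also have "\<dots> = B * (a z * h (of_real p * z) + b z * h (of_real (1-p) * z))" by (simp add: algebra_simps)
          also have "\<dots> \<le> B * h z" using contr zS zR B by (intro mult_left_mono) auto
          finally show ?thesis .
        qed
      qed
    qed
  qed
  show "z \<in> S \<Longrightarrow> 1 \<le> norm z \<Longrightarrow> g k z \<le> B * h z" using main by blast
qed

lemma Re_ge_sector: assumes "\<bar>Arg z\<bar> \<le> \<epsilon>" "\<epsilon> \<le> pi" shows "cos \<epsilon> * norm z \<le> Re z"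
proof (cases "z = 0")
  case True then show ?thesis by simp
next
  case False
  have "cos \<epsilon> \<le> cos \<bar>Arg z\<bar>" using assms by (subst cos_mono_le_eq) auto
  hence "cos \<epsilon> \<le> Re z / norm z" using cos_Arg[OF False] by simp
  thus ?thesis using False by (simp add: field_simps)
qed

lemma Re_le_sector: assumes "\<epsilon> \<le> \<bar>Arg z\<bar>" "\<bar>Arg z\<bar> \<le> pi" "0 \<le> \<epsilon>" shows "Re z \<le> cos \<epsilon> * norm z"
proof (cases "z = 0")
  case True then show ?thesis by simp
next
  case False
  have "cos \<bar>Arg z\<bar> \<le> cos \<epsilon>" using assms by (subst cos_mono_le_eq) auto
  hence "Re z / norm z \<le> cos \<epsilon>" using cos_Arg[OF False] by simp
  thus ?thesis using False by (simp add: field_simps)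
qed

lemma F0: assumes "0 < p" "p \<le> 1 - p" shows "F p 0 z = 1"
proof -
  have "(\<lambda>n. complex_of_real (pX p 0 n) * z ^ n / of_nat (fact n)) = (\<lambda>n. if n = 0 then 1 else 0)"
    by auto
  with F_sums[OF assms, of 0 z] have "(\<lambda>n. if n = 0 then (1::complex) else 0) sums F p 0 z" by simp
  moreover have "(\<lambda>n. if n = 0 then (1::complex) else 0) sums 1" using sums_single[of 0 "\<lambda>_. 1::complex"] by simp
  ultimately show ?thesis using sums_unique2 by blast
qed

lemma At_F: "At p k z = exp (- z) * F p k z" unfolding At_def F_def ..

lemma normF: assumes "0 < p" "p \<le> 1 - p" shows "norm (F p k z) \<le> exp (norm z)"
  unfolding F_def by (rule norm_series_bdd) (rule pX_abs[OF assms])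

lemma nR: "norm (complex_of_real c * z) = \<bar>c\<bar> * norm z" by (simp add: norm_mult)
lemma ReR: "Re (complex_of_real c * z) = c * Re z" by simp

lemma At_rec: assumes "0 < p" "p \<le> 1 - p"
  shows "At p (Suc k) z = exp (- (of_real p * z)) * At p (Suc k) (of_real (1-p) * z)
     + At p k (of_real p * z) - exp (- (of_real p * z)) * At p k (of_real p * z)"
proof -
  let ?pz = "complex_of_real p * z" and ?qz = "complex_of_real (1-p) * z"
  have e1: "exp (-z) = exp (- ?pz) * exp (- ?qz)" by (simp add: exp_add[symmetric] algebra_simps)
  have e2: "exp (-z) * exp ?qz = exp (- ?pz)" by (simp add: exp_add[symmetric] algebra_simps)
  have e3: "exp (-z) * exp (complex_of_real (1-p-p) * z) = exp (- ?pz) * exp (- ?pz)"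
    by (simp add: exp_add[symmetric] algebra_simps)
  have "At p (Suc k) z = exp (-z) * F p (Suc k) ?qz + exp (-z) * exp ?qz * F p k ?pz
      - exp (-z) * exp (complex_of_real (1-p-p) * z) * F p k ?pz"
    unfolding At_F F_rec[OF assms, of k z] by (simp add: algebra_simps)
  also have "\<dots> = exp (- ?pz) * At p (Suc k) ?qz + At p k ?pz - exp (- ?pz) * At p k ?pz"
  proof -
    have e1': "exp (-z) * F p (Suc k) ?qz = exp (- ?pz) * At p (Suc k) ?qz" by (simp only: At_F e1 mult.assoc)
    have e2': "exp (-z) * exp ?qz * F p k ?pz = At p k ?pz" by (simp only: At_F e2)
    have e3': "exp (-z) * exp (complex_of_real (1-p-p) * z) * F p k ?pz = exp (- ?pz) * At p k ?pz"
      by (simp only: At_F e3 mult.assoc)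
    show ?thesis by (simp only: e1' e2' e3')
  qed
  finally show ?thesis .
qed

lemma ReS: "0 \<le> c \<Longrightarrow> c * norm z \<le> Re z \<Longrightarrow> 0 \<le> Re (z::complex)"
proof -
  assume "0 \<le> c" "c * norm z \<le> Re z"
  moreover have "0 \<le> c * norm z" using \<open>0 \<le> c\<close> by simp
  ultimately show ?thesis by linarith
qed

lemma part1:
  assumes p: "0 < p" "p \<le> 1 - p" and c: "0 < c" and e: "0 < e"
  shows "\<exists>B. \<forall>k z. c * norm z \<le> Re z \<longrightarrow> 1 \<le> norm z \<longrightarrow> norm (At p k z) \<le> B * norm z powr e"
proof -
  define pe where "pe = p powr e"
  have pe0: "0 < pe" using p by (simp add: pe_def)
  have pe1: "pe < 1" unfolding pe_def using p e powr_less_mono2[of e p 1] by simp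
  define R where "R = max (1/p) (ln (2/(1-pe)) / (p*c))"
  define B where "B = exp (2*R)"
  have Rp: "1/p \<le> R" unfolding R_def by simp
  hence "p * (1/p) \<le> p * R" using p by (intro mult_left_mono) auto
  hence R1: "1 \<le> p * R" using p by simp
  have Rpos: "0 < R" using Rp p by (meson less_le_trans zero_less_divide_1_iff)
  have B1: "1 \<le> B" unfolding B_def using Rpos by simp
  let ?S = "{z. c * norm z \<le> Re z}"
  have res: "z \<in> ?S \<Longrightarrow> 1 \<le> norm z \<Longrightarrow> norm (At p k z) \<le> B * norm z powr e" for k z
  proof (rule gen_ind[where g="\<lambda>k z. norm (At p k z)" and h="\<lambda>z. norm z powr e" and S="?S"
        and a="\<lambda>z. 1 + exp (- (p * Re z))" and b="\<lambda>z. exp (- (p * Re z))" and R=R, OF p R1])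
    fix z assume "z \<in> ?S" "R \<le> norm z"
    then show "of_real p * z \<in> ?S \<and> of_real (1-p) * z \<in> ?S" using p
      by (simp only: mem_Collect_eq nR ReR) (auto simp: mult.left_commute intro: mult_left_mono)
  next
    fix z assume z: "z \<in> ?S" "1 \<le> norm z"
    have "norm (At p 0 z) = exp (- Re z)" unfolding At_F F0[OF p] by simp
    also have "\<dots> \<le> 1" using ReS[of c z] z c by simp
    also have "1 \<le> B * norm z powr e"
    proof -
      have "1 \<le> norm z powr e" using ge_one_powr_ge_zero[of "norm z" e] z e by simp
      from mult_mono[OF B1 this] B1 show ?thesis by simp
    qed
    finally show "norm (At p 0 z) \<le> B * norm z powr e" .
  next
    fix k z assume z: "z \<in> ?S" "1 \<le> norm z" "norm z \<le> R"
    have Re0: "0 \<le> Re z" using ReS[of c z] z c by simp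
    have "norm (At p k z) = exp (- Re z) * norm (F p k z)" unfolding At_F by (simp add: norm_mult)
    also have "\<dots> \<le> 1 * exp (norm z)" using Re0 normF[OF p] by (intro mult_mono) auto
    also have "\<dots> \<le> exp (2 * R)" using z Rpos by simp
    also have "\<dots> = B * 1" unfolding B_def by simp
    also have "\<dots> \<le> B * norm z powr e" using B1 ge_one_powr_ge_zero[of "norm z" e] z e by simp
    finally show "norm (At p k z) \<le> B * norm z powr e" .
  next
    fix k z assume z: "z \<in> ?S" "R \<le> norm z"
    let ?pz = "complex_of_real p * z" and ?qz = "complex_of_real (1-p) * z"
    have ne: "norm (exp (- ?pz)) = exp (- (p * Re z))" by simp
    have "norm (At p (Suc k) z) \<le> norm (exp (- ?pz) * At p (Suc k) ?qz) + norm (At p k ?pz) + norm (exp (- ?pz) * At p k ?pz)"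
      unfolding At_rec[OF p, of k z] by (rule order_trans[OF norm_triangle_ineq4 add_right_mono[OF norm_triangle_ineq]])
    also have "\<dots> = (1 + exp (- (p * Re z))) * norm (At p k ?pz) + exp (- (p * Re z)) * norm (At p (Suc k) ?qz)"
      unfolding norm_mult ne by (simp add: algebra_simps)
    finally show "norm (At p (Suc k) z) \<le> (1 + exp (- (p * Re z))) * norm (At p k ?pz) + exp (- (p * Re z)) * norm (At p (Suc k) ?qz)" .
  next
    fix z assume z: "z \<in> ?S" "R \<le> norm z"
    let ?pz = "complex_of_real p * z" and ?qz = "complex_of_real (1-p) * z"
    define X where "X = norm z powr e"
    define d where "d = exp (- (p * Re z))"
    have X0: "0 \<le> X" unfolding X_def by simp
    have h1: "norm ?pz powr e = pe * X" unfolding nR X_def pe_def using p by (simp add: powr_mult)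
    have h2: "norm ?qz powr e \<le> X" unfolding nR X_def using p e
      by (simp only: powr_mult abs_of_nonneg) (auto intro!: mult_left_le_one_le powr_le1)
    have "ln (2/(1-pe)) / (p*c) \<le> norm z" using z unfolding R_def by simp
    hence "ln (2/(1-pe)) \<le> p * c * norm z" using p c by (simp add: field_simps)
    also have "\<dots> \<le> p * Re z" using z p by (simp add: mult.assoc mult_left_mono)
    finally have "exp (- (p * Re z)) \<le> exp (- ln (2/(1-pe)))" by simp
    also have "\<dots> = (1 - pe) / 2" using pe1 by (simp add: exp_minus)
    finally have d: "d \<le> (1 - pe) / 2" unfolding d_def .
    have d0: "0 \<le> d" unfolding d_def by simp
    have "(1 + d) * (pe * X) + d * norm ?qz powr e \<le> (1 + d) * (pe * X) + d * X"
      using h2 d0 by (intro add_left_mono mult_left_mono) auto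
    also have "\<dots> = (pe + d * pe + d) * X" by (simp add: algebra_simps)
    also have "\<dots> \<le> 1 * X"
    proof (rule mult_right_mono[OF _ X0])
      have "d * pe \<le> d" using d0 pe1 using mult_left_mono[of pe 1 d] by simp
      moreover have "2 * d \<le> 1 - pe" using d by simp
      ultimately show "pe + d * pe + d \<le> 1" by linarith
    qed
    finally show "(1 + exp (- (p * Re z))) * norm ?pz powr e + exp (- (p * Re z)) * norm ?qz powr e \<le> norm z powr e"
      unfolding h1 d_def[symmetric] X_def by simp
  qed (use B1 in auto)
  show ?thesis using res by blast
qed

lemma part2:
  assumes p: "0 < p" "p \<le> 1 - p" and c: "0 \<le> c" "c < 1" and e: "e = (1 - c) / 2"
  shows "\<exists>B. \<forall>k z. Re z \<le> c * norm z \<longrightarrow> 1 \<le> norm z \<longrightarrow> norm (F p k z) \<le> B * exp ((1 - e) * norm z)"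
proof -
  have e0: "0 < e" and e1: "e \<le> 1 - e" using c e by auto
  define R where "R = max (1/p) (ln 3 / (p*e))"
  define B where "B = exp R"
  have Rp: "1/p \<le> R" unfolding R_def by simp
  hence "p * (1/p) \<le> p * R" using p by (intro mult_left_mono) auto
  hence R1: "1 \<le> p * R" using p by simp
  have Rpos: "0 < R" using Rp p by (meson less_le_trans zero_less_divide_1_iff)
  have B1: "1 \<le> B" unfolding B_def using Rpos by simp
  have hge: "1 \<le> exp ((1 - e) * norm z)" for z using e1 e0 by simp
  let ?S = "{z. Re z \<le> c * norm z}"
  have res: "z \<in> ?S \<Longrightarrow> 1 \<le> norm z \<Longrightarrow> norm (F p k z) \<le> B * exp ((1 - e) * norm z)" for k z
  proof (rule gen_ind[where g="\<lambda>k z. norm (F p k z)" and h="\<lambda>z. exp ((1 - e) * norm z)" and S="?S"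
        and a="\<lambda>z. exp ((1-p) * Re z) + exp ((1-p-p) * Re z)" and b="\<lambda>z. 1" and R=R, OF p R1])
    fix z assume "z \<in> ?S" "R \<le> norm z"
    then show "of_real p * z \<in> ?S \<and> of_real (1-p) * z \<in> ?S" using p
      by (simp only: mem_Collect_eq nR ReR) (auto simp: mult.left_commute intro: mult_left_mono)
  next
    fix z assume z: "z \<in> ?S" "1 \<le> norm z"
    show "norm (F p 0 z) \<le> B * exp ((1 - e) * norm z)"
      unfolding F0[OF p] using mult_mono[OF B1 hge[of z]] B1 by simp
  next
    fix k z assume z: "z \<in> ?S" "1 \<le> norm z" "norm z \<le> R"
    have "norm (F p k z) \<le> exp (norm z)" by (rule normF[OF p])
    also have "\<dots> \<le> B * 1" unfolding B_def using z by simp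
    also have "\<dots> \<le> B * exp ((1 - e) * norm z)" using hge[of z] B1 by (intro mult_left_mono) auto
    finally show "norm (F p k z) \<le> B * exp ((1 - e) * norm z)" .
  next
    fix k z assume z: "z \<in> ?S" "R \<le> norm z"
    let ?pz = "complex_of_real p * z" and ?qz = "complex_of_real (1-p) * z"
    have n1: "norm (exp (complex_of_real (1-p) * z)) = exp ((1-p) * Re z)" by (simp only: norm_exp_eq_Re ReR)
    have n2: "norm (exp (complex_of_real (1-p-p) * z)) = exp ((1-p-p) * Re z)" by (simp only: norm_exp_eq_Re ReR)
    have "norm (F p (Suc k) z) \<le> norm (F p (Suc k) ?qz) + norm (F p k ?pz * (exp ?qz - exp (complex_of_real (1-p-p) * z)))"
      unfolding F_rec[OF p, of k z] by (rule norm_triangle_ineq)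
    also have "\<dots> \<le> norm (F p (Suc k) ?qz) + norm (F p k ?pz) * (exp ((1-p) * Re z) + exp ((1-p-p) * Re z))"
      unfolding norm_mult n1[symmetric] n2[symmetric]
      by (intro add_left_mono mult_left_mono norm_triangle_ineq4) auto
    finally show "norm (F p (Suc k) z) \<le> (exp ((1-p) * Re z) + exp ((1-p-p) * Re z)) * norm (F p k ?pz) + 1 * norm (F p (Suc k) ?qz)"
      by (simp add: algebra_simps)
  next
    fix z assume z: "z \<in> ?S" "R \<le> norm z"
    let ?pz = "complex_of_real p * z" and ?qz = "complex_of_real (1-p) * z"
    define r where "r = norm z"
    have r0: "0 \<le> r" unfolding r_def by simp
    have Rez: "Re z \<le> c * r" using z unfolding r_def by simp
    have "ln 3 / (p*e) \<le> r" using z unfolding R_def r_def by simp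
    hence l3: "ln 3 \<le> p * e * r" using p e0 by (simp add: field_simps)
    have t: "exp (- (p * e * r)) \<le> 1/3"
    proof -
      have "exp (- (p * e * r)) \<le> exp (- ln 3)" using l3 by simp
      also have "\<dots> = 1/3" by (simp add: exp_minus)
      finally show ?thesis .
    qed
    have a1: "exp ((1-p) * Re z) \<le> exp ((1-p) * c * r)" using Rez p
      by (simp add: mult.assoc mult_left_mono)
    have "(1-p-p) * Re z \<le> (1-p-p) * (c * r)" using Rez p by (intro mult_left_mono) auto
    also have "\<dots> \<le> (1-p) * c * r" using p c r0 by (simp add: algebra_simps mult_nonneg_nonneg)
    finally have a2: "exp ((1-p-p) * Re z) \<le> exp ((1-p) * c * r)" by simp
    define E where "E = exp ((1 - e) * r)"
    have i1: "exp ((1-p) * c * r) * exp ((1 - e) * (p * r)) = E * exp (- ((1-p) * e * r))"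
      unfolding E_def exp_add[symmetric] by (rule arg_cong[where f=exp]) (simp add: e field_simps)
    have i2: "exp ((1 - e) * ((1-p) * r)) = E * exp (- ((1 - e) * p * r))"
      unfolding E_def exp_add[symmetric] by (rule arg_cong[where f=exp]) (simp add: field_simps)
    have j1: "exp (- ((1-p) * e * r)) \<le> exp (- (p * e * r))" using p e0 r0
      by (simp add: mult_right_mono mult.assoc)
    have "e * (p * r) \<le> (1 - e) * (p * r)" using p r0 by (intro mult_right_mono[OF e1]) auto
    hence j2: "exp (- ((1 - e) * p * r)) \<le> exp (- (p * e * r))"
      by (simp add: mult.commute mult.left_commute)
    have E0: "0 \<le> E" unfolding E_def by simp
    have np: "norm ?pz = p * r" and nq: "norm ?qz = (1-p) * r" unfolding r_def nR using p by auto
    have "(exp ((1-p) * Re z) + exp ((1-p-p) * Re z)) * exp ((1 - e) * norm ?pz) + 1 * exp ((1 - e) * norm ?qz)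
        \<le> (2 * exp ((1-p) * c * r)) * exp ((1 - e) * (p * r)) + exp ((1 - e) * ((1-p) * r))"
    proof -
      have "exp ((1-p) * Re z) + exp ((1-p-p) * Re z) \<le> 2 * exp ((1-p) * c * r)" using a1 a2 by linarith
      hence "(exp ((1-p) * Re z) + exp ((1-p-p) * Re z)) * exp ((1 - e) * (p * r)) \<le> 2 * exp ((1-p) * c * r) * exp ((1 - e) * (p * r))"
        by (rule mult_right_mono) simp
      thus ?thesis unfolding np nq by simp
    qed
    also have "\<dots> = 2 * (E * exp (- ((1-p) * e * r))) + E * exp (- ((1 - e) * p * r))"
      using i1 i2 by simp
    also have "\<dots> \<le> 2 * (E * (1/3)) + E * (1/3)"
      using order_trans[OF j1 t] order_trans[OF j2 t] E0 by (intro add_mono mult_left_mono) auto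
    also have "\<dots> = E" by simp
    finally show "(exp ((1-p) * Re z) + exp ((1-p-p) * Re z)) * exp ((1 - e) * norm ?pz) + 1 * exp ((1 - e) * norm ?qz)
        \<le> exp ((1 - e) * norm z)" unfolding E_def r_def .
  qed (use B1 in auto)
  show ?thesis using res by blast
qed

theorem mainTheorem7:
  fixes p \<epsilon> :: real
  assumes "0 < p" and "p \<le> 1 - p" and "0 < \<epsilon>" and "\<epsilon> < pi / 2"
  shows "\<exists>\<epsilon>'. 0 < \<epsilon>' \<and> \<epsilon>' < 1 \<and>
    (\<exists>C1. \<forall>k z. 1 \<le> norm z \<and> \<bar>Arg z\<bar> \<le> \<epsilon> \<longrightarrow>
        norm (At p k z) \<le> C1 * norm z powr \<epsilon>') \<and>
    (\<exists>C2. \<forall>k z. 1 \<le> norm z \<and> \<epsilon> \<le> \<bar>Arg z\<bar> \<and> \<bar>Arg z\<bar> \<le> pi \<longrightarrow>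
        norm (exp z * At p k z) \<le> C2 * exp ((1 - \<epsilon>') * norm z))"
proof -
  define c where "c = cos \<epsilon>"
  have c0: "0 < c" unfolding c_def using assms by (intro cos_gt_zero_pi) auto
  have c1: "c < 1" unfolding c_def using cos_monotone_0_pi[of 0 \<epsilon>] assms by simp
  define e where "e = (1 - c) / 2"
  have e0: "0 < e" "e < 1" unfolding e_def using c0 c1 by auto
  have epi: "\<epsilon> \<le> pi" using assms by simp
  obtain B1 where B1: "\<forall>k z. c * norm z \<le> Re z \<longrightarrow> 1 \<le> norm z \<longrightarrow> norm (At p k z) \<le> B1 * norm z powr e"
    using part1[OF assms(1,2) c0 e0(1)] by blast
  obtain B2 where B2: "\<forall>k z. Re z \<le> c * norm z \<longrightarrow> 1 \<le> norm z \<longrightarrow> norm (F p k z) \<le> B2 * exp ((1 - e) * norm z)"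
    using part2[OF assms(1,2) less_imp_le[OF c0] c1 e_def] by blast
  have i: "\<forall>k z. 1 \<le> norm z \<and> \<bar>Arg z\<bar> \<le> \<epsilon> \<longrightarrow> norm (At p k z) \<le> B1 * norm z powr e"
    using B1 Re_ge_sector[OF _ epi] unfolding c_def by blast
  have ii: "\<forall>k z. 1 \<le> norm z \<and> \<epsilon> \<le> \<bar>Arg z\<bar> \<and> \<bar>Arg z\<bar> \<le> pi \<longrightarrow>
        norm (exp z * At p k z) \<le> B2 * exp ((1 - e) * norm z)"
  proof (intro allI impI)
    fix k z assume z: "1 \<le> norm z \<and> \<epsilon> \<le> \<bar>Arg z\<bar> \<and> \<bar>Arg z\<bar> \<le> pi"
    have "exp z * At p k z = F p k z" unfolding At_F by (simp add: exp_minus_inverse mult.assoc[symmetric])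
    moreover have "Re z \<le> c * norm z" unfolding c_def using Re_le_sector[of \<epsilon> z] z assms by auto
    ultimately show "norm (exp z * At p k z) \<le> B2 * exp ((1 - e) * norm z)" using B2 z by auto
  qed
  show ?thesis using e0 i ii by blast
qed

end
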